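(* Consider a wireless localization network with $n$ anchors and $N_a$ agents. For each agent $k\in\{1,\dots,N_a\}$ let $\phi_{k1},\dots,\phi_{kn}\in\mathbb{R}$, $\xi_{k1},\dots,\xi_{kn}\ge 0$ and a localization requirement $\varrho_k>0$ be given; let $\mathbf{R}_k=\operatorname{diag}\{\xi_{k1},\dots,\xi_{kn}\}$, $\mathbf{c}_k=[\cos2\phi_{k1},\dots,\cos2\phi_{kn}]^{\mathsf T}$, $\mathbf{s}_k=[\sin2\phi_{k1},\dots,\sin2\phi_{kn}]^{\mathsf T}$. For $\mathbf{x}\in\mathbb{R}^n$, $\mathbf{x}\succeq\mathbf{0}$, define $\mathcal{P}(\mathbf{p}_k;\mathbf{x})=\operatorname{tr}\{(\sum_{j=1}^n x_j\xi_{kj}\mathbf{u}(\phi_{kj})\mathbf{u}(\phi_{kj})^{\mathsf T})^{-1}\}$ (equal to $+\infty$ if the matrix is singular). Let $c_1,\dots,c_L$ be affine functions on $\mathbb{R}^n$. Then the problem $$\min_{\mathbf{x}\succeq\mathbf{0}}\ \mathbf{1}^{\mathsf T}\mathbf{x}\quad\text{s.t.}\quad \mathcal{P}(\mathbf{p}_k;\mathbf{x})\le\varrho_k\ \ \forall k,\qquad c_l(\mathbf{x})\le 0\ \ (l=1,\dots,L)$$ is equivalent to the second-order cone program $$\min_{\mathbf{x}\succeq\mathbf{0}}\ \mathbf{1}^{\mathsf T}\mathbf{x}\quad\text{s.t.}\quad \big\|\mathbf{A}_k\mathbf{R}_k\mathbf{x}+\mathbf{b}_k\big\|\le \mathbf{1}^{\mathsf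 T}\mathbf{R}_k\mathbf{x}-2\varrho_k^{-1}\ \ \forall k,\qquad c_l(\mathbf{x})\le 0\ \ (l=1,\dots,L),$$ where $\mathbf{A}_k=[\mathbf{c}_k\ \ \mathbf{s}_k\ \ \mathbf{0}]^{\mathsf T}\in\mathbb{R}^{3\times n}$ and $\mathbf{b}_k=[0\ \ 0\ \ 2\varrho_k^{-1}]^{\mathsf T}$.
   Context: $\mathbf{u}(\phi)=[\cos\phi\ \ \sin\phi]^{\mathsf T}$; $\mathbf{1}$ is the all-ones vector, $\mathbf{0}$ the zero vector; $\|\cdot\|$ is the Euclidean norm; $\mathbf{x}\succeq\mathbf{0}$ means entrywise nonnegative. $\mathbf{x}$ is the vector of anchor transmit powers and $\mathcal{P}(\mathbf{p}_k;\mathbf{x})$ is the squared position error bound of agent $k$. "Equivalent" means the two problems have the same feasible set (and objective). *)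

theory Defs
  imports "HOL-Analysis.Analysis"
begin

definition uvec :: "real \<Rightarrow> real^2" where
  "uvec \<phi> = vector [cos \<phi>, sin \<phi>]"

definition EFIM :: "('n::finite \<Rightarrow> real) \<Rightarrow> ('n \<Rightarrow> real) \<Rightarrow> real^'n \<Rightarrow> real^2^2" where
  "EFIM \<phi> \<xi> x = (\<chi> a b. \<Sum>j\<in>UNIV. x$j * \<xi> j * (uvec (\<phi> j))$a * (uvec (\<phi> j))$b)"

definition PEB :: "('n::finite \<Rightarrow> real) \<Rightarrow> ('n \<Rightarrow> real) \<Rightarrow> real^'n \<Rightarrow> ereal" where
  "PEB \<phi> \<xi> x = (if invertible (EFIM \<phi> \<xi> x) then ereal (trace (matrix_inv (EFIM \<phi> \<xi> x))) else \<infinity>)"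

definition Rmat :: "('n::finite \<Rightarrow> real) \<Rightarrow> real^'n^'n" where
  "Rmat \<xi> = (\<chi> i j. if i = j then \<xi> i else 0)"

definition Amat :: "('n::finite \<Rightarrow> real) \<Rightarrow> real^'n^3" where
  "Amat \<phi> = vector [(\<chi> j. cos (2 * \<phi> j)), (\<chi> j. sin (2 * \<phi> j)), 0]"

definition bvec :: "real \<Rightarrow> real^3" where
  "bvec \<rho> = vector [0, 0, 2 / \<rho>]"

definition ones :: "real^'n::finite" where
  "ones = (\<chi> i. 1)"

definition nonneg :: "real^'n::finite \<Rightarrow> bool" where
  "nonneg x \<longleftrightarrow> (\<forall>j. 0 \<le> x$j)"

definition feasible_orig ::
  "nat \<Rightarrow> (nat \<Rightarrow> 'n::finite \<Rightarrow> real) \<Rightarrow> (nat \<Rightarrow> 'n \<Rightarrow> real) \<Rightarrow> (nat \<Rightarrow> real)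
   \<Rightarrow> nat \<Rightarrow> (nat \<Rightarrow> real^'n) \<Rightarrow> (nat \<Rightarrow> real) \<Rightarrow> (real^'n) set" where
  "feasible_orig Na \<phi> \<xi> \<rho> L a d =
     {x. nonneg x \<and> (\<forall>k<Na. PEB (\<phi> k) (\<xi> k) x \<le> ereal (\<rho> k))
         \<and> (\<forall>l<L. a l \<bullet> x + d l \<le> 0)}"

definition feasible_socp ::
  "nat \<Rightarrow> (nat \<Rightarrow> 'n::finite \<Rightarrow> real) \<Rightarrow> (nat \<Rightarrow> 'n \<Rightarrow> real) \<Rightarrow> (nat \<Rightarrow> real)
   \<Rightarrow> nat \<Rightarrow> (nat \<Rightarrow> real^'n) \<Rightarrow> (nat \<Rightarrow> real) \<Rightarrow> (real^'n) set" where
  "feasible_socp Na \<phi> \<xi> \<rho> L a d =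
     {x. nonneg x \<and> (\<forall>k<Na. norm (Amat (\<phi> k) *v (Rmat (\<xi> k) *v x) + bvec (\<rho> k))
                              \<le> ones \<bullet> (Rmat (\<xi> k) *v x) - 2 / \<rho> k)
         \<and> (\<forall>l<L. a l \<bullet> x + d l \<le> 0)}"

end

theory Submission
  imports Defs
begin

lemma sq_aux:
  fixes a b c e :: real
  assumes "a * (a * (e * e)) + b * (b * (c * c)) = 2 * (a * (b * (c * e)))"
  shows "a * e = b * c"
proof -
  have "(a*e - b*c)^2 = 0" using assms by (simp add: power2_eq_square algebra_simps)
  thus ?thesis by simp
qed

lemma inv2:
  fixes J :: "real^2^2" assumes dz: "det J \<noteq> 0"
  shows "trace (matrix_inv J) = (J$1$1 + J$2$2) / det J"
proof -
  define M :: "real^2^2" where "M = (1 / det J) *\<^sub>R (vector [vector [J$2$2, -J$1$2], vector [-J$2$1, J$1$1]])"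
  have JM: "J ** M = mat 1" "M ** J = mat 1"
    using dz by (auto dest: sq_aux simp: M_def matrix_matrix_mult_def vec_eq_iff forall_2 sum_2 det_2 mat_def field_simps)
  define A where "A = matrix_inv J"
  have A: "J ** A = mat 1 \<and> A ** J = mat 1"
    unfolding A_def matrix_inv_def by (rule someI[of _ M]) (use JM in auto)
  have "A = A ** (J ** M)" using JM by simp
  also have "\<dots> = M" using A by (simp add: matrix_mul_assoc)
  finally have "A = M" .
  thus ?thesis unfolding A_def by (simp add: M_def trace_def sum_2 add_divide_distrib)
qed

lemma realpart:
  fixes S C T \<rho> :: real
  assumes "0 \<le> S" "C^2 + T^2 \<le> S^2" "0 < \<rho>"
  shows "(S^2 - C^2 - T^2 \<noteq> 0 \<and> S / ((S^2 - C^2 - T^2)/4) \<le> \<rho>) \<longleftrightarrow>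
         sqrt (C^2 + T^2 + (2/\<rho>)^2) \<le> S - 2/\<rho>"
proof -
  have e0: "2 * S * (2/\<rho>) = 4*S/\<rho>" by simp
  have e: "(S - 2/\<rho>)^2 = S^2 - 4*S/\<rho> + (2/\<rho>)^2"
    unfolding power2_diff using e0 by linarith
  show ?thesis
proof
  assume h: "S^2 - C^2 - T^2 \<noteq> 0 \<and> S / ((S^2 - C^2 - T^2)/4) \<le> \<rho>"
  define D where "D = S^2 - C^2 - T^2"
  have Dp: "D > 0" using h assms unfolding D_def by auto
  have "4*S \<le> \<rho> * D" using h Dp unfolding D_def[symmetric] by (simp add: field_simps)
  hence k: "4*S/\<rho> \<le> D" using assms(3) by (simp add: field_simps)
  have Sp: "S > 0"
  proof (rule ccontr)
    assume "\<not> S > 0"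
    hence "S = 0" using assms(1) by simp
    moreover have "0 \<le> C^2" "0 \<le> T^2" by simp_all
    ultimately have "D \<le> 0" unfolding D_def by simp
    thus False using Dp by simp
  qed
  have "S^2 \<ge> 4*S/\<rho>"
  proof -
    have "0 \<le> C^2" "0 \<le> T^2" by simp_all
    thus ?thesis using k unfolding D_def by linarith
  qed
  hence "S * (4/\<rho>) \<le> S * S" by (simp add: power2_eq_square mult.commute)
  hence "S \<ge> 4/\<rho>" using Sp mult_le_cancel_left_pos by blast
  moreover have "4/\<rho> \<ge> 2/\<rho>" using assms(3) by (simp add: divide_right_mono)
  ultimately have g: "S - 2/\<rho> \<ge> 0" by linarith
  have "C^2 + T^2 + (2/\<rho>)^2 \<le> (S - 2/\<rho>)^2"
    using k e unfolding D_def by linarith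
  thus "sqrt (C^2 + T^2 + (2/\<rho>)^2) \<le> S - 2/\<rho>" by (rule real_le_lsqrt[OF g])
next
  assume h: "sqrt (C^2 + T^2 + (2/\<rho>)^2) \<le> S - 2/\<rho>"
  have "0 \<le> sqrt (C^2 + T^2 + (2/\<rho>)^2)" by simp
  hence g: "S - 2/\<rho> \<ge> 0" using h by linarith
  have "C^2 + T^2 + (2/\<rho>)^2 \<le> (S - 2/\<rho>)^2"
  proof -
    have q0: "0 \<le> C^2 + T^2 + (2/\<rho>)^2" by simp
    have "(sqrt (C^2 + T^2 + (2/\<rho>)^2))^2 \<le> (S - 2/\<rho>)^2"
      using h by (rule power_mono) simp
    thus ?thesis using q0 by simp
  qed
  hence k: "4*S/\<rho> \<le> S^2 - C^2 - T^2" using e by linarith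
  have "2/\<rho> > 0" using assms(3) by simp
  hence "S > 0" using g by linarith
  hence kp: "4*S/\<rho> > 0" using assms(3) by simp
  show "S^2 - C^2 - T^2 \<noteq> 0 \<and> S / ((S^2 - C^2 - T^2)/4) \<le> \<rho>"
  proof
    show "S^2 - C^2 - T^2 \<noteq> 0" using k kp by linarith
    have Dp: "S^2 - C^2 - T^2 > 0" using k kp by linarith
    have "4*S \<le> \<rho> * (S^2 - C^2 - T^2)" using k assms(3) by (simp add: pos_divide_le_eq mult.commute)
    thus "S / ((S^2 - C^2 - T^2)/4) \<le> \<rho>" using Dp by (simp add: pos_divide_le_eq mult.commute)
  qed
qed
qed


lemma cs_ineq:
  fixes w \<theta> :: "'n::finite \<Rightarrow> real"
  assumes "\<And>j. 0 \<le> w j"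
  shows "(\<Sum>j\<in>UNIV. w j * cos (\<theta> j))^2 + (\<Sum>j\<in>UNIV. w j * sin (\<theta> j))^2 \<le> (\<Sum>j\<in>UNIV. w j)^2"
proof -
  define z where "z = (\<Sum>j\<in>UNIV. complex_of_real (w j) * cis (\<theta> j))"
  have re: "Re z = (\<Sum>j\<in>UNIV. w j * cos (\<theta> j))" unfolding z_def by (simp add: Re_sum)
  have im: "Im z = (\<Sum>j\<in>UNIV. w j * sin (\<theta> j))" unfolding z_def by (simp add: Im_sum)
  have "cmod z \<le> (\<Sum>j\<in>UNIV. cmod (complex_of_real (w j) * cis (\<theta> j)))"
    unfolding z_def by (rule norm_sum)
  also have "\<dots> = (\<Sum>j\<in>UNIV. w j)"
    using assms by (simp add: norm_mult)
  finally have "(cmod z)^2 \<le> (\<Sum>j\<in>UNIV. w j)^2" by (simp add: power_mono)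
  thus ?thesis by (simp add: cmod_power2 re im)
qed

lemma agent:
  fixes \<phi> \<xi> :: "'n::finite \<Rightarrow> real" and x :: "real^'n" and \<rho> :: real
  assumes xi: "\<And>j. 0 \<le> \<xi> j" and x: "nonneg x" and rho: "0 < \<rho>"
  shows "PEB \<phi> \<xi> x \<le> ereal \<rho> \<longleftrightarrow>
     norm (Amat \<phi> *v (Rmat \<xi> *v x) + bvec \<rho>) \<le> ones \<bullet> (Rmat \<xi> *v x) - 2 / \<rho>"
proof -
  define w where "w j = x$j * \<xi> j" for j
  have w0: "0 \<le> w j" for j using xi x unfolding w_def nonneg_def by simp
  define S where "S = (\<Sum>j\<in>UNIV. w j)"
  define C where "C = (\<Sum>j\<in>UNIV. w j * cos (2 * \<phi> j))"
  define T where "T = (\<Sum>j\<in>UNIV. w j * sin (2 * \<phi> j))"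
  define E where "E = EFIM \<phi> \<xi> x"
  have e11: "E$1$1 = (S + C)/2"
  proof -
    have "E$1$1 = (\<Sum>j\<in>UNIV. w j * ((1 + cos (2 * \<phi> j))/2))"
      unfolding E_def EFIM_def uvec_def w_def vec_lambda_beta vector_2
      by (intro sum.cong) (auto simp: cos_double_cos power2_eq_square)
    also have "\<dots> = (\<Sum>j\<in>UNIV. w j / 2 + w j * cos (2 * \<phi> j) / 2)"
      by (rule sum.cong) (simp_all add: field_simps)
    also have "\<dots> = S/2 + C/2" by (simp add: sum.distrib S_def C_def sum_divide_distrib)
    finally show ?thesis by simp
  qed
  have e22: "E$2$2 = (S - C)/2"
  proof -
    have "E$2$2 = (\<Sum>j\<in>UNIV. w j * ((1 - cos (2 * \<phi> j))/2))"
      unfolding E_def EFIM_def uvec_def w_def vec_lambda_beta vector_2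
      by (intro sum.cong) (auto simp: cos_double_sin power2_eq_square)
    also have "\<dots> = (\<Sum>j\<in>UNIV. w j / 2 - w j * cos (2 * \<phi> j) / 2)"
      by (rule sum.cong) (simp_all add: field_simps)
    also have "\<dots> = S/2 - C/2" by (simp add: sum_subtractf S_def C_def sum_divide_distrib)
    finally show ?thesis by simp
  qed
  have e12: "E$1$2 = T/2" and e21: "E$2$1 = T/2"
  proof -
    have "E$1$2 = (\<Sum>j\<in>UNIV. w j * (sin (2 * \<phi> j)/2))"
      unfolding E_def EFIM_def uvec_def w_def vec_lambda_beta vector_2
      by (intro sum.cong) (auto simp: sin_double)
    thus "E$1$2 = T/2" by (simp add: T_def sum_divide_distrib)
    have "E$2$1 = (\<Sum>j\<in>UNIV. w j * (sin (2 * \<phi> j)/2))"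
      unfolding E_def EFIM_def uvec_def w_def vec_lambda_beta vector_2
      by (intro sum.cong) (auto simp: sin_double)
    thus "E$2$1 = T/2" by (simp add: T_def sum_divide_distrib)
  qed
  have detE: "det E = (S^2 - C^2 - T^2)/4"
    by (simp add: det_2 e11 e12 e21 e22 power2_eq_square field_simps)
  have cs: "C^2 + T^2 \<le> S^2"
    unfolding C_def T_def S_def by (rule cs_ineq) (rule w0)
  have S0: "0 \<le> S" unfolding S_def by (simp add: sum_nonneg w0)
  have lhs: "PEB \<phi> \<xi> x \<le> ereal \<rho> \<longleftrightarrow>
      (S^2 - C^2 - T^2 \<noteq> 0 \<and> S / ((S^2 - C^2 - T^2)/4) \<le> \<rho>)"
  proof (cases "det E = 0")
    case True
    thus ?thesis unfolding PEB_def E_def[symmetric] using detE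
      by (simp add: invertible_det_nz)
  next
    case False
    have "trace (matrix_inv E) = S / ((S^2 - C^2 - T^2)/4)"
    proof -
      have tr: "E$1$1 + E$2$2 = S" by (simp add: e11 e22 field_simps)
      show ?thesis using inv2[OF False] by (simp only: tr detE)
    qed
    thus ?thesis unfolding PEB_def E_def[symmetric] using detE False
      by (simp add: invertible_det_nz)
  qed
  have Rx: "Rmat \<xi> *v x = (\<chi> i. w i)"
  proof -
    have r: "(\<Sum>j\<in>UNIV. (if i = j then \<xi> i else 0) * x$j) = \<xi> i * x$i" for i
    proof -
      have "(\<Sum>j\<in>UNIV. (if i = j then \<xi> i else 0) * x$j) = (\<Sum>j\<in>UNIV. if i = j then \<xi> i * x$i else 0)"
        by (rule sum.cong) auto
      thus ?thesis by simp
    qed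
    show ?thesis unfolding Rmat_def matrix_vector_mult_def vec_eq_iff vec_lambda_beta r
      by (simp add: w_def mult.commute)
  qed
  have v1: "(Amat \<phi> *v (Rmat \<xi> *v x) + bvec \<rho>)$1 = C"
    unfolding Rx by (simp add: Amat_def bvec_def matrix_vector_mult_def C_def mult.commute)
  have v2: "(Amat \<phi> *v (Rmat \<xi> *v x) + bvec \<rho>)$2 = T"
    unfolding Rx by (simp add: Amat_def bvec_def matrix_vector_mult_def T_def mult.commute)
  have v3: "(Amat \<phi> *v (Rmat \<xi> *v x) + bvec \<rho>)$3 = 2/\<rho>"
    unfolding Rx by (simp add: Amat_def bvec_def matrix_vector_mult_def)
  have nrm: "norm (Amat \<phi> *v (Rmat \<xi> *v x) + bvec \<rho>) = sqrt (C^2 + T^2 + (2/\<rho>)^2)"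
    unfolding norm_eq_sqrt_inner inner_vec_def sum_3 v1 v2 v3 by (simp add: power2_eq_square)
  have one: "ones \<bullet> (Rmat \<xi> *v x) = S"
    by (simp add: Rx ones_def inner_vec_def S_def)
  show ?thesis unfolding lhs nrm one by (rule realpart[OF S0 cs rho])
qed

theorem proposition3:
  fixes Na L :: nat
    and \<phi> \<xi> :: "nat \<Rightarrow> 'n::finite \<Rightarrow> real"
    and \<rho> :: "nat \<Rightarrow> real"
    and a :: "nat \<Rightarrow> real^'n" and d :: "nat \<Rightarrow> real"
  assumes "\<And>k j. k < Na \<Longrightarrow> 0 \<le> \<xi> k j"
    and "\<And>k. k < Na \<Longrightarrow> 0 < \<rho> k"
  shows "feasible_orig Na \<phi> \<xi> \<rho> L a d = feasible_socp Na \<phi> \<xi> \<rho> L a d"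
  unfolding feasible_orig_def feasible_socp_def
proof (rule Collect_cong)
  fix x :: "real^'n"
  show "(nonneg x \<and> (\<forall>k<Na. PEB (\<phi> k) (\<xi> k) x \<le> ereal (\<rho> k)) \<and> (\<forall>l<L. a l \<bullet> x + d l \<le> 0)) =
        (nonneg x \<and> (\<forall>k<Na. norm (Amat (\<phi> k) *v (Rmat (\<xi> k) *v x) + bvec (\<rho> k))
                              \<le> ones \<bullet> (Rmat (\<xi> k) *v x) - 2 / \<rho> k) \<and> (\<forall>l<L. a l \<bullet> x + d l \<le> 0))"
  proof (cases "nonneg x")
    case True
    have "PEB (\<phi> k) (\<xi> k) x \<le> ereal (\<rho> k) \<longleftrightarrow>
      norm (Amat (\<phi> k) *v (Rmat (\<xi> k) *v x) + bvec (\<rho> k)) \<le> ones \<bullet> (Rmat (\<xi> k) *v x) - 2 / \<rho> k"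
      if "k < Na" for k
      by (rule agent) (use assms that True in auto)
    hence "(\<forall>k<Na. PEB (\<phi> k) (\<xi> k) x \<le> ereal (\<rho> k)) \<longleftrightarrow>
      (\<forall>k<Na. norm (Amat (\<phi> k) *v (Rmat (\<xi> k) *v x) + bvec (\<rho> k)) \<le> ones \<bullet> (Rmat (\<xi> k) *v x) - 2 / \<rho> k)"
      by (intro all_cong1 imp_cong refl)
    thus ?thesis by (simp only:)
  qed simp
qed

end
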